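(* For all $n\ge3$, $\mathcal{H}_{C_n}=\mathcal{H}_{C_n}^\psi=[1,\infty)$, and $\mathcal{H}_{C_4}^\phi=[2,\infty)$. Moreover, for $n>4$, $[2,\infty)\subset\mathcal{H}_{C_n}^\phi\subset[1,\infty)$, with $1\notin\mathcal{H}_{C_n}^\phi$ for $n$ even.
   Context: $C_n$ is the cycle graph on $n$ vertices. For a graph $G$ on $\{1,\dots,n\}$ and $I\subset\mathbb{R}$, $\mathcal{P}_G(I)$ is the set of real symmetric positive semidefinite $n\times n$ matrices with entries in $I$ and $a_{ij}=0$ whenever $i\ne j$ and $(i,j)$ is not an edge; $\mathcal{P}_G=\mathcal{P}_G(\mathbb{R})$. For $A$ with nonnegative entries, $A^{\circ\alpha}=(a_{ij}^\alpha)$ with $0^\alpha:=0$. $\psi_\alpha(x)=\mathrm{sgn}(x)|x|^\alpha$, $\phi_\alpha(x)=|x|^\alpha$ ($x\ne0$), $\psi_\alpha(0)=\phi_\alpha(0)=0$, applied entrywise. $\mathcal{H}_G=\{\alpha\in\mathbb{R}:A^{\circ\alpha}\in\mathcal{P}_G\ \forall A\in\mathcal{P}_G([0,\infty))\}$, $\mathcal{H}_G^\psi=\{\alpha:\psi_\alpha[A]\in\mathcal{P}_G\ \forall A\in\mathcal{P}_G(\mathbb{R})\}$, $\mathcal{H}_G^\phi=\{\alpha:\phi_\alpha[A]\in\mathcal{P}_G\ \forall A\in\mathcal{P}_G(\mathbb{R})\}$. *)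

theory Defs
  imports Complex_Main
begin

text \<open>Matrices of size n are functions nat => nat => real; only entries with
 indices < n matter. Vertices are 0..n-1 (instead of 1..n).\<close>

definition cycle_graph :: "nat \<Rightarrow> nat \<Rightarrow> nat \<Rightarrow> bool" where
  "cycle_graph n i j \<longleftrightarrow> (j = Suc i mod n \<or> i = Suc j mod n)"

definition psd_mat :: "nat \<Rightarrow> (nat \<Rightarrow> nat \<Rightarrow> real) \<Rightarrow> bool" where
  "psd_mat n A \<longleftrightarrow> (\<forall>i<n. \<forall>j<n. A i j = A j i) \<and>
     (\<forall>x :: nat \<Rightarrow> real. 0 \<le> (\<Sum>i<n. \<Sum>j<n. x i * A i j * x j))"

definition PG :: "nat \<Rightarrow> (nat \<Rightarrow> nat \<Rightarrow> bool) \<Rightarrow> real set \<Rightarrow> (nat \<Rightarrow> nat \<Rightarrow> real) set" where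
  "PG n G I = {A. psd_mat n A \<and> (\<forall>i<n. \<forall>j<n. A i j \<in> I) \<and>
                 (\<forall>i<n. \<forall>j<n. i \<noteq> j \<and> \<not> G i j \<longrightarrow> A i j = 0)}"

text \<open>Entrywise maps; note 0 powr a = 0 in Isabelle, matching 0^a := 0.\<close>
definition hpow :: "real \<Rightarrow> (nat \<Rightarrow> nat \<Rightarrow> real) \<Rightarrow> (nat \<Rightarrow> nat \<Rightarrow> real)" where
  "hpow a A = (\<lambda>i j. A i j powr a)"

definition psi_pow :: "real \<Rightarrow> real \<Rightarrow> real" where
  "psi_pow a x = sgn x * \<bar>x\<bar> powr a"

definition phi_pow :: "real \<Rightarrow> real \<Rightarrow> real" where
  "phi_pow a x = \<bar>x\<bar> powr a"

definition HG :: "nat \<Rightarrow> (nat \<Rightarrow> nat \<Rightarrow> bool) \<Rightarrow> real set" where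
  "HG n G = {a. \<forall>A \<in> PG n G {0..}. hpow a A \<in> PG n G UNIV}"

definition HG_psi :: "nat \<Rightarrow> (nat \<Rightarrow> nat \<Rightarrow> bool) \<Rightarrow> real set" where
  "HG_psi n G = {a. \<forall>A \<in> PG n G UNIV. (\<lambda>i j. psi_pow a (A i j)) \<in> PG n G UNIV}"

definition HG_phi :: "nat \<Rightarrow> (nat \<Rightarrow> nat \<Rightarrow> bool) \<Rightarrow> real set" where
  "HG_phi n G = {a. \<forall>A \<in> PG n G UNIV. (\<lambda>i j. phi_pow a (A i j)) \<in> PG n G UNIV}"

end

theory Submission
  imports Defs "HOL-Analysis.Analysis"
begin

definition schur :: "nat \<Rightarrow> (nat\<Rightarrow>nat\<Rightarrow>real) \<Rightarrow> nat\<Rightarrow>nat\<Rightarrow>real" where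
  "schur m A = (\<lambda>i j. A i j - A i m * A m j / A m m)"

definition qf :: "nat \<Rightarrow> (nat\<Rightarrow>nat\<Rightarrow>real) \<Rightarrow> (nat \<Rightarrow> real) \<Rightarrow> real" where
  "qf n A x = (\<Sum>i<n. \<Sum>j<n. x i * A i j * x j)"

definition symm :: "nat \<Rightarrow> (nat\<Rightarrow>nat\<Rightarrow>real) \<Rightarrow> bool" where
  "symm n A \<longleftrightarrow> (\<forall>i<n. \<forall>j<n. A i j = A j i)"

lemma psd_iff: "psd_mat n A \<longleftrightarrow> symm n A \<and> (\<forall>x. 0 \<le> qf n A x)"
  unfolding psd_mat_def symm_def qf_def by blast

lemma qf_Suc:
  assumes "symm (Suc m) A"
  shows "qf (Suc m) A x = qf m A x + 2 * x m * (\<Sum>i<m. A i m * x i) + A m m * (x m)^2"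
proof -
  have s: "(\<Sum>j<m. x m * A m j * x j) = x m * (\<Sum>i<m. A i m * x i)"
    using assms unfolding symm_def by (auto simp: sum_distrib_left intro!: sum.cong)
  have s2: "(\<Sum>i<m. x i * A i m * x m) = x m * (\<Sum>i<m. A i m * x i)"
    by (auto simp: sum_distrib_left intro!: sum.cong)
  show ?thesis unfolding qf_def
    by (simp only: sum.lessThan_Suc sum.distrib s s2) (simp add: power2_eq_square algebra_simps)
qed

lemma qf_schur:
  assumes "symm (Suc m) A"
  shows "qf m (schur m A) x = qf m A x - (\<Sum>i<m. A i m * x i)^2 / A m m"
proof -
  have "qf m (schur m A) x = qf m A x - (\<Sum>i<m. \<Sum>j<m. (A i m * x i) * (A j m * x j) / A m m)"
    unfolding qf_def schur_def using assms unfolding symm_def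
    by (auto simp: sum_subtractf[symmetric] algebra_simps intro!: sum.cong)
  also have "(\<Sum>i<m. \<Sum>j<m. (A i m * x i) * (A j m * x j) / A m m) = (\<Sum>i<m. A i m * x i)^2 / A m m"
    by (simp add: power2_eq_square sum_product sum_divide_distrib)
  finally show ?thesis .
qed

lemma symm_schur: "symm (Suc m) A \<Longrightarrow> symm m (schur m A)"
  unfolding symm_def schur_def by auto

lemma qf_cong: "(\<And>i j. i<n \<Longrightarrow> j<n \<Longrightarrow> A i j = B i j) \<Longrightarrow> qf n A x = qf n B x"
  unfolding qf_def by (auto intro!: sum.cong)

lemma qf_cong_x: "(\<And>i. i<n \<Longrightarrow> x i = y i) \<Longrightarrow> qf n A x = qf n A y"
  unfolding qf_def by (auto intro!: sum.cong)

lemma psd_cong: "psd_mat n A \<Longrightarrow> (\<And>i j. i<n \<Longrightarrow> j<n \<Longrightarrow> A i j = B i j) \<Longrightarrow> psd_mat n B"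
  unfolding psd_iff symm_def using qf_cong by (metis)

lemma sum_two:
  fixes g :: "nat \<Rightarrow> real"
  assumes "i < n" "j < n" "i \<noteq> j"
  shows "(\<Sum>k<n. g k * ((if k = i then u else 0) + (if k = j then v else 0))) = g i * u + g j * v"
proof -
  have "\<And>k. g k * ((if k = i then u else 0) + (if k = j then v else 0)) = (if k = i then g i * u else 0) + (if k = j then g j * v else 0)"
    using assms by auto
  then show ?thesis using assms by (simp add: sum.distrib)
qed

lemma qf_two:
  assumes "i < n" "j < n" "i \<noteq> j"
  shows "qf n A (\<lambda>k. (if k = i then u else 0) + (if k = j then v else 0))
     = u * u * A i i + u * v * A i j + v * u * A j i + v * v * A j j"
proof -
  let ?x = "\<lambda>k. (if k = i then u else 0) + (if k = j then v else 0)"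
  have inner: "(\<Sum>l<n. ?x k * A k l * ?x l) = ?x k * (A k i * u + A k j * v)" for k
  proof -
    have "(\<Sum>l<n. ?x k * A k l * ?x l) = ?x k * (\<Sum>l<n. A k l * ?x l)"
      by (simp add: sum_distrib_left mult.assoc)
    also have "(\<Sum>l<n. A k l * ?x l) = A k i * u + A k j * v"
      by (rule sum_two[OF assms])
    finally show ?thesis .
  qed
  have "qf n A ?x = (\<Sum>k<n. (A k i * u + A k j * v) * ?x k)"
    unfolding qf_def inner by (simp add: mult.commute)
  also have "\<dots> = (A i i * u + A i j * v) * u + (A j i * u + A j j * v) * v"
    by (rule sum_two[OF assms])
  finally show ?thesis by (simp add: algebra_simps)
qed

lemma qf_one: "i < n \<Longrightarrow> qf n A (\<lambda>k. if k = i then u else 0) = u * u * A i i"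
  unfolding qf_def by (simp add: if_distrib[where f="\<lambda>t. t * _"] if_distrib[where f="\<lambda>t. _ * t"] cong: if_cong)

lemma psd_diag: "psd_mat n A \<Longrightarrow> i < n \<Longrightarrow> 0 \<le> A i i"
proof -
  assume a: "psd_mat n A" "i < n"
  have "0 \<le> qf n A (\<lambda>k. if k = i then 1 else 0)" using a unfolding psd_iff by blast
  then show ?thesis using qf_one[OF a(2), of A 1] by simp
qed

lemma quad_disc:
  fixes a b c :: real
  assumes "\<And>u v. 0 \<le> u * u * a + 2 * u * v * b + v * v * c"
  shows "b^2 \<le> a * c"
proof -
  have a: "0 \<le> a" using assms[of 1 0] by simp
  show ?thesis
  proof (cases "a = 0")
    case True
    have "b = 0"
    proof (rule ccontr)
      assume "b \<noteq> 0"
      have "0 \<le> (-(c+1)/(2*b)) * (-(c+1)/(2*b)) * a + 2 * (-(c+1)/(2*b)) * 1 * b + 1 * 1 * c"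
        by (rule assms)
      also have "\<dots> = -1" using True \<open>b \<noteq> 0\<close> by (simp add: field_simps)
      finally show False by simp
    qed
    then show ?thesis using True by simp
  next
    case False
    then have "0 < a" using a by simp
    have "0 \<le> (-b) * (-b) * a + 2 * (-b) * a * b + a * a * c" by (rule assms)
    then have "0 \<le> a * (a * c - b^2)" by (simp add: algebra_simps power2_eq_square)
    then show ?thesis using \<open>0 < a\<close> by (simp add: zero_le_mult_iff)
  qed
qed

lemma psd_minor:
  assumes "psd_mat n A" "i < n" "j < n" "i \<noteq> j"
  shows "(A i j)^2 \<le> A i i * A j j"
proof (rule quad_disc)
  fix u v
  have "A j i = A i j" using assms unfolding psd_mat_def by auto
  have "0 \<le> qf n A (\<lambda>k. (if k = i then u else 0) + (if k = j then v else 0))"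
    using assms(1) unfolding psd_iff by blast
  also have "\<dots> = u * u * A i i + 2 * u * v * A i j + v * v * A j j"
    unfolding qf_two[OF assms(2-4)] \<open>A j i = A i j\<close> by (simp add: algebra_simps)
  finally show "0 \<le> u * u * A i i + 2 * u * v * A i j + v * v * A j j" .
qed

lemma psd_zero:
  assumes "psd_mat n A" "i < n" "j < n" "A i i = 0"
  shows "A i j = 0"
proof (cases "i = j")
  case False
  then show ?thesis using psd_minor[OF assms(1-3) False] assms(4) by simp
qed (use assms in simp)

lemma S1:
  assumes "psd_mat (Suc m) A"
  shows "psd_mat m (schur m A)"
proof -
  have sy: "symm (Suc m) A" using assms unfolding psd_iff by simp
  have nn: "0 \<le> A m m" using psd_diag[OF assms] by simp
  have "0 \<le> qf m (schur m A) x" for x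
  proof -
    let ?s = "\<Sum>i<m. A i m * x i"
    define y where "y = x(m := - ?s / A m m)"
    have "0 \<le> qf (Suc m) A y" using assms unfolding psd_iff by simp
    also have "qf (Suc m) A y = qf m A x + 2 * y m * ?s + A m m * (y m)^2"
      using qf_Suc[OF sy, of y] qf_cong_x[of m y x A] by (simp add: y_def)
    also have "\<dots> = qf m (schur m A) x"
    proof (cases "A m m = 0")
      case True
      have "A i m = 0" if "i < m" for i using psd_zero[OF assms, of m i] True that
        psd_mat_def assms by (metis lessI less_SucI)
      then show ?thesis using True by (simp add: qf_schur[OF sy] y_def)
    next
      case False
      then show ?thesis by (simp add: qf_schur[OF sy] y_def field_simps power2_eq_square)
    qed
    finally show ?thesis .
  qed
  then show ?thesis using symm_schur[OF sy] unfolding psd_iff by simp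
qed

lemma S2:
  assumes sy: "symm (Suc m) A" and p: "psd_mat m (schur m A)"
    and d: "0 < A m m \<or> (A m m = 0 \<and> (\<forall>i<m. A i m = 0))"
  shows "psd_mat (Suc m) A"
proof -
  have "0 \<le> qf (Suc m) A x" for x
  proof -
    let ?s = "\<Sum>i<m. A i m * x i"
    have q: "0 \<le> qf m (schur m A) x" using p unfolding psd_iff by simp
    show ?thesis
    proof (cases "A m m = 0")
      case True
      then have "?s = 0" using d by simp
      then show ?thesis using q True by (simp add: qf_Suc[OF sy] qf_schur[OF sy])
    next
      case False
      then have pos: "0 < A m m" using d by auto
      have "qf (Suc m) A x = qf m (schur m A) x + A m m * (x m + ?s / A m m)^2"
        using pos by (simp add: qf_Suc[OF sy] qf_schur[OF sy] field_simps power2_eq_square)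
      then show ?thesis using q pos by simp
    qed
  qed
  then show ?thesis using sy unfolding psd_iff by simp
qed

lemma psd_symm: "psd_mat n A \<Longrightarrow> symm n A"
  by (simp add: psd_iff)

lemma diag_mono:
  assumes p: "psd_mat n A" and sy: "symm n B"
    and off: "\<And>i j. i < n \<Longrightarrow> j < n \<Longrightarrow> i \<noteq> j \<Longrightarrow> B i j = A i j"
    and dg: "\<And>i. i < n \<Longrightarrow> A i i \<le> B i i"
  shows "psd_mat n B"
proof -
  have "0 \<le> qf n B x" for x
  proof -
    have eq: "B i j = A i j + (if i = j then B i i - A i i else 0)" if "i < n" "j < n" for i j
      using off that by auto
    have "qf n B x = (\<Sum>i<n. \<Sum>j<n. x i * A i j * x j + x i * (if i = j then B i i - A i i else 0) * x j)"
      unfolding qf_def by (intro sum.cong refl) (simp add: eq distrib_left distrib_right)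
    also have "\<dots> = qf n A x + (\<Sum>i<n. \<Sum>j<n. x i * (if i = j then B i i - A i i else 0) * x j)"
      unfolding qf_def by (simp only: sum.distrib)
    also have "(\<Sum>i<n. \<Sum>j<n. x i * (if i = j then B i i - A i i else 0) * x j) = (\<Sum>i<n. x i * (B i i - A i i) * x i)"
      by (simp add: if_distrib[where f="\<lambda>t. t * _"] if_distrib[where f="\<lambda>t. _ * t"] cong: if_cong)
    also have "\<dots> \<ge> 0"
    proof (rule sum_nonneg)
      fix i assume "i \<in> {..<n}"
      then have "0 \<le> (B i i - A i i) * (x i)^2" using dg by simp
      also have "(B i i - A i i) * (x i)^2 = x i * (B i i - A i i) * x i" by (simp add: power2_eq_square)
      finally show "0 \<le> x i * (B i i - A i i) * x i" .
    qed
    moreover have "0 \<le> qf n A x" using p unfolding psd_iff by simp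
    ultimately show ?thesis by linarith
  qed
  then show ?thesis using sy unfolding psd_iff by simp
qed

lemma psd2:
  assumes "symm 2 M" "0 \<le> M 0 0" "0 \<le> M 1 1" "(M 0 1)^2 \<le> M 0 0 * M 1 1"
  shows "psd_mat 2 M"
proof -
  have "0 \<le> qf 2 M x" for x
  proof -
    have m10: "M 1 0 = M 0 1" using assms(1) unfolding symm_def by auto
    have e: "qf 2 M x = x 0 * x 0 * M 0 0 + 2 * x 0 * x 1 * M 0 1 + x 1 * x 1 * M 1 1"
      using m10 unfolding qf_def by (simp add: numeral_2_eq_2 algebra_simps)
    show ?thesis
    proof (cases "M 0 0 = 0")
      case True
      then have "M 0 1 = 0" using assms(4) by simp
      then show ?thesis using e True assms(3) by simp
    next
      case False
      then have p: "0 < M 0 0" using assms(2) by simp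
      have "M 0 0 * qf 2 M x = (M 0 0 * x 0 + M 0 1 * x 1)^2 + (M 0 0 * M 1 1 - (M 0 1)^2) * (x 1)^2"
        unfolding e by (simp add: algebra_simps power2_eq_square)
      also have "\<dots> \<ge> 0" using assms(4) by simp
      finally show ?thesis using p by (simp add: zero_le_mult_iff)
    qed
  qed
  then show ?thesis using assms(1) unfolding psd_iff by simp
qed

lemma superadd:
  fixes x y p :: real
  assumes "0 \<le> x" "0 \<le> y" "1 \<le> p"
  shows "x powr p + y powr p \<le> (x + y) powr p"
proof (cases "x + y = 0")
  case True
  then have "x = 0" "y = 0" using assms by auto
  then show ?thesis by simp
next
  case False
  then have s: "0 < x + y" using assms by simp
  define t where "t = x / (x + y)"
  define u where "u = y / (x + y)"
  have t01: "0 \<le> t" "t \<le> 1" using assms s by (auto simp: t_def field_simps)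
  have u01: "0 \<le> u" "u \<le> 1" using assms s by (auto simp: u_def field_simps)
  have tu: "t + u = 1" using s by (simp add: t_def u_def add_divide_distrib[symmetric])
  have "t powr p \<le> t powr 1" by (rule powr_mono'[OF assms(3) t01])
  then have tp: "t powr p \<le> t" using t01 by simp
  have "u powr p \<le> u powr 1" by (rule powr_mono'[OF assms(3) u01])
  then have up: "u powr p \<le> u" using u01 by simp
  have x: "(x + y) * t = x" and y: "(x + y) * u = y" using s by (auto simp: t_def u_def)
  have hx: "x powr p = (x + y) powr p * t powr p" using x powr_mult by metis
  have hy: "y powr p = (x + y) powr p * u powr p" using y powr_mult by metis
  have "x powr p + y powr p = (x + y) powr p * (t powr p + u powr p)"
    unfolding hx hy by (simp add: algebra_simps)
  also have "\<dots> \<le> (x + y) powr p * (t + u)"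
    using tp up by (intro mult_left_mono) auto
  finally show ?thesis using tu by simp
qed

lemma superadd_diff:
  fixes x y p :: real
  assumes "0 \<le> y" "y \<le> x" "1 \<le> p"
  shows "(x - y) powr p \<le> x powr p - y powr p"
  using superadd[of "x - y" y p] assms by simp

lemma tangent:
  fixes x y p :: real
  assumes "0 \<le> x" "0 \<le> y" "1 \<le> p"
  shows "y powr p + p * y powr (p - 1) * (x - y) \<le> x powr p"
proof (cases "y = 0")
  case True
  then show ?thesis using assms by simp
next
  case False
  then have y: "0 < y" using assms by simp
  have yy: "y powr (p - 1) * y = y powr p"
    using y by (simp add: powr_diff)
  show ?thesis
  proof (cases "x = 0")
    case True
    have "y powr p + p * y powr (p - 1) * (x - y) = (1 - p) * y powr p"
      using True yy by (simp add: algebra_simps)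
    also have "\<dots> \<le> 0" using assms by (simp add: mult_nonpos_nonneg)
    finally show ?thesis using True by simp
  next
    case False
    then have x: "0 < x" using assms by simp
    have "p * y powr (p - 1) * (x - y) \<le> x powr p - y powr p"
    proof (rule convex_on_imp_above_tangent[OF powr_convex[OF assms(3)]])
      show "connected {0::real<..}" by simp
      show "y \<in> interior {0::real<..}" using y by (simp add: interior_open)
      show "x \<in> {0<..}" using x by simp
      show "((\<lambda>x. x powr p) has_field_derivative p * y powr (p - 1)) (at y within {0<..})"
        using has_real_derivative_powr[OF y] by (rule has_field_derivative_at_within)
    qed
    then show ?thesis by simp
  qed
qed

lemma amgm_sqrt:
  fixes h1 h2 d1 d2 :: real
  assumes "0 < h1" "0 < h2" "0 \<le> d1" "0 \<le> d2"
  shows "sqrt (d1 * d2) \<le> (d1 * h2 + h1 * d2) / (2 * sqrt (h1 * h2))"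
proof -
  have pos: "0 < 2 * sqrt (h1 * h2)" using assms by simp
  have "2 * sqrt (h1 * h2) * sqrt (d1 * d2) = 2 * (sqrt (d1 * h2) * sqrt (h1 * d2))"
    by (simp add: real_sqrt_mult[symmetric] algebra_simps)
  also have "\<dots> \<le> d1 * h2 + h1 * d2"
  proof -
    have "0 \<le> (sqrt (d1 * h2) - sqrt (h1 * d2))^2" by simp
    then show ?thesis using assms by (simp add: power2_diff algebra_simps)
  qed
  finally have "2 * sqrt (h1 * h2) * sqrt (d1 * d2) \<le> d1 * h2 + h1 * d2" .
  then show ?thesis using pos by (simp add: field_simps mult.commute)
qed

lemma g_le:
  fixes a b c e p t :: real
  assumes "0 \<le> a" "0 \<le> b" "0 \<le> c" "0 \<le> e" "1 \<le> p" "0 \<le> t"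
  shows "p * (a*c + t*(b*e)) powr (p - 1) * (b*e) \<le>
         sqrt ((p * (a^2 + t*b^2) powr (p - 1) * b^2) * (p * (c^2 + t*e^2) powr (p - 1) * e^2))"
proof (rule real_le_rsqrt)
  let ?M = "a*c + t*(b*e)" and ?A = "a^2 + t*b^2" and ?C = "c^2 + t*e^2"
  have M0: "0 \<le> ?M" using assms by simp
  have MAC: "?M^2 \<le> ?A * ?C"
  proof -
    have "?A * ?C - ?M^2 = t * (a*e - b*c)^2" by (simp add: power2_eq_square algebra_simps)
    also have "\<dots> \<ge> 0" using assms by simp
    finally show ?thesis by simp
  qed
  have "(?M powr (p - 1))^2 = (?M^2) powr (p - 1)"
    by (simp add: power2_eq_square powr_mult)
  also have "\<dots> \<le> (?A * ?C) powr (p - 1)"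
    using MAC assms by (intro powr_mono2) auto
  also have "\<dots> = ?A powr (p - 1) * ?C powr (p - 1)" by (simp add: powr_mult)
  finally have *: "(?M powr (p - 1))^2 \<le> ?A powr (p - 1) * ?C powr (p - 1)" .
  have "(p * ?M powr (p - 1) * (b*e))^2 = (p * (b * e))^2 * (?M powr (p - 1))^2"
    by (simp add: power2_eq_square algebra_simps)
  also have "\<dots> \<le> (p * (b * e))^2 * (?A powr (p - 1) * ?C powr (p - 1))"
    using * by (intro mult_left_mono) auto
  also have "\<dots> = (p * ?A powr (p - 1) * b^2) * (p * ?C powr (p - 1) * e^2)"
    by (simp add: power2_eq_square algebra_simps)
  finally show "(p * ?M powr (p - 1) * (b*e))^2 \<le> (p * ?A powr (p - 1) * b^2) * (p * ?C powr (p - 1) * e^2)" .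
qed

lemma key:
  fixes a b c e p :: real
  assumes a: "0 \<le> a" and b: "0 \<le> b" and c: "0 \<le> c" and e: "0 \<le> e" and p: "1 \<le> p"
  shows "(a*c + b*e) powr p - (a*c) powr p \<le>
    sqrt (((a^2 + b^2) powr p - (a^2) powr p) * ((c^2 + e^2) powr p - (c^2) powr p))"
proof (cases "b = 0 \<or> e = 0")
  case True
  have "0 \<le> ((a^2 + b^2) powr p - (a^2) powr p) * ((c^2 + e^2) powr p - (c^2) powr p)"
    using p by (intro mult_nonneg_nonneg) (auto intro!: powr_mono2)
  then show ?thesis using True by auto
next
  case False
  then have b0: "0 < b" and e0: "0 < e" using b e by auto
  define h1 where "h1 t = (a^2 + t*b^2) powr p - (a^2) powr p" for t
  define h2 where "h2 t = (c^2 + t*e^2) powr p - (c^2) powr p" for t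
  define g where "g t = (a*c + t*(b*e)) powr p - (a*c) powr p" for t
  define F where "F t = sqrt (h1 t * h2 t) - g t" for t
  have "F 0 \<le> F 1"
  proof (rule DERIV_nonneg_imp_increasing_open[of 0 1 F])
    have cp: "continuous_on {0..1} (\<lambda>t. (u + t * v) powr p)" if "0 \<le> u" "0 \<le> v" for u v :: real
    proof (rule continuous_on_powr')
      show "continuous_on {0..1} (\<lambda>t. u + t * v)" by (intro continuous_intros)
      show "continuous_on {0..1} (\<lambda>t. p)" by (intro continuous_intros)
      show "\<forall>x\<in>{0..1}. 0 \<le> u + x * v \<and> (u + x * v = 0 \<longrightarrow> 0 < p)"
        using that p by auto
    qed
    have c1: "continuous_on {0..1} h1" unfolding h1_def
      using cp[of "a^2" "b^2"] by (intro continuous_on_diff continuous_on_const) auto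
    have c2: "continuous_on {0..1} h2" unfolding h2_def
      using cp[of "c^2" "e^2"] by (intro continuous_on_diff continuous_on_const) auto
    have c3: "continuous_on {0..1} g" unfolding g_def
      using cp[of "a*c" "b*e"] a b c e by (intro continuous_on_diff continuous_on_const) auto
    show "continuous_on {0..1} F"
      unfolding F_def[abs_def] using c1 c2 c3 by (intro continuous_intros) auto
  next
    fix t :: real assume t: "0 < t" "t < 1"
    let ?A = "a^2 + t*b^2" and ?C = "c^2 + t*e^2" and ?M = "a*c + t*(b*e)"
    have A: "0 < ?A" using t b0 by (simp add: add_nonneg_pos)
    have C: "0 < ?C" using t e0 by (simp add: add_nonneg_pos)
    have M: "0 < ?M" using t b0 e0 a c by (simp add: add_nonneg_pos)
    define d1 where "d1 = p * ?A powr (p - 1) * b^2"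
    define d2 where "d2 = p * ?C powr (p - 1) * e^2"
    define dg where "dg = p * ?M powr (p - 1) * (b*e)"
    have D1: "DERIV h1 t :> d1"
    proof -
      have "DERIV (\<lambda>t. a^2 + t*b^2) t :> b^2" by (auto intro!: derivative_eq_intros)
      from DERIV_fun_powr[OF this, of p] A
      have "DERIV (\<lambda>t. (a^2 + t*b^2) powr p) t :> p * (a^2 + t*b^2) powr (p - 1) * (b^2)" by simp
      from DERIV_diff[OF this DERIV_const]
      show ?thesis unfolding h1_def[abs_def] d1_def by simp
    qed
    have D2: "DERIV h2 t :> d2"
    proof -
      have "DERIV (\<lambda>t. c^2 + t*e^2) t :> e^2" by (auto intro!: derivative_eq_intros)
      from DERIV_fun_powr[OF this, of p] C
      have "DERIV (\<lambda>t. (c^2 + t*e^2) powr p) t :> p * (c^2 + t*e^2) powr (p - 1) * (e^2)" by simp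
      from DERIV_diff[OF this DERIV_const]
      show ?thesis unfolding h2_def[abs_def] d2_def by simp
    qed
    have DG: "DERIV g t :> dg"
    proof -
      have "DERIV (\<lambda>t. a*c + t*(b*e)) t :> b*e" by (auto intro!: derivative_eq_intros)
      from DERIV_fun_powr[OF this, of p] M
      have "DERIV (\<lambda>t. (a*c + t*(b*e)) powr p) t :> p * (a*c + t*(b*e)) powr (p - 1) * (b*e)" by simp
      from DERIV_diff[OF this DERIV_const]
      show ?thesis unfolding g_def[abs_def] dg_def by simp
    qed
    have h1p: "0 < h1 t" unfolding h1_def using p A b0 t
      by (simp add: powr_less_mono2)
    have h2p: "0 < h2 t" unfolding h2_def using p C e0 t
      by (simp add: powr_less_mono2)
    have H: "0 < h1 t * h2 t" using h1p h2p by simp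
    have DS: "DERIV (\<lambda>t. sqrt (h1 t * h2 t)) t :> inverse (sqrt (h1 t * h2 t)) * (d1 * h2 t + d2 * h1 t) / 2"
      using DERIV_chain2[OF DERIV_real_sqrt[OF H] DERIV_mult[OF D1 D2]] by simp
    have DF: "DERIV F t :> inverse (sqrt (h1 t * h2 t)) * (d1 * h2 t + d2 * h1 t) / 2 - dg"
      unfolding F_def[abs_def] by (rule DERIV_diff[OF DS DG])
    have d1n: "0 \<le> d1" unfolding d1_def using p by simp
    have d2n: "0 \<le> d2" unfolding d2_def using p by simp
    have "dg \<le> sqrt (d1 * d2)" unfolding dg_def d1_def d2_def
      using g_le[OF a b c e p] t by simp
    also have "\<dots> \<le> (d1 * h2 t + h1 t * d2) / (2 * sqrt (h1 t * h2 t))"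
      by (rule amgm_sqrt[OF h1p h2p d1n d2n])
    also have "\<dots> = inverse (sqrt (h1 t * h2 t)) * (d1 * h2 t + d2 * h1 t) / 2"
      by (simp add: field_simps)
    finally show "\<exists>y. DERIV F t :> y \<and> 0 \<le> y" using DF by auto
  qed simp
  moreover have "F 0 = 0" by (simp add: F_def h1_def h2_def g_def)
  ultimately show ?thesis by (simp add: F_def h1_def h2_def g_def)
qed

lemma psi_nonneg: "0 \<le> x \<Longrightarrow> psi_pow a x = x powr a"
  by (cases "x = 0") (auto simp: psi_pow_def)

lemma psi_neg: "psi_pow a (- x) = - psi_pow a x"
  by (simp add: psi_pow_def sgn_minus)

lemma psi_sq: "(psi_pow a x)^2 = \<bar>x\<bar> powr a * \<bar>x\<bar> powr a"
  by (auto simp: psi_pow_def power2_eq_square sgn_if)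

lemma sqrt_powr: "0 \<le> X \<Longrightarrow> (sqrt X) powr a = sqrt (X powr a)"
  by (simp add: powr_half_sqrt[symmetric] powr_powr mult.commute)

lemma claim_pos:
  fixes p P q Q r R a :: real
  assumes P: "0 \<le> P" "P \<le> p" and Q: "0 \<le> Q" "Q \<le> q" and RR: "R^2 = P*Q"
    and rR: "(r - R)^2 \<le> (p-P)*(q-Q)" and a: "1 \<le> a" and r0: "0 \<le> r" and R0: "0 \<le> R"
  shows "\<bar>r powr a - R powr a\<bar> \<le> sqrt ((p powr a - P powr a) * (q powr a - Q powr a))"
proof -
  define s where "s = sqrt ((p-P)*(q-Q))"
  define K where "K = sqrt ((p powr a - P powr a) * (q powr a - Q powr a))"
  have s0: "0 \<le> s" using P Q by (simp add: s_def)
  have rs: "\<bar>r - R\<bar> \<le> s" unfolding s_def by (rule real_le_rsqrt) (use rR in simp)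
  show ?thesis
  proof (cases "r \<le> R")
    case True
    have t1: "R powr a + a * R powr (a - 1) * (r - R) \<le> r powr a" by (rule tangent[OF r0 R0 a])
    have tP: "P powr a + a * P powr (a - 1) * (p - P) \<le> p powr a" by (rule tangent) (use P a in auto)
    have tQ: "Q powr a + a * Q powr (a - 1) * (q - Q) \<le> q powr a" by (rule tangent) (use Q a in auto)
    have "R powr a - r powr a \<le> a * R powr (a - 1) * (R - r)" using t1 by (simp add: algebra_simps)
    also have "\<dots> \<le> a * R powr (a - 1) * s" using rs True a by (intro mult_left_mono) auto
    also have "\<dots> \<le> K" unfolding K_def
    proof (rule real_le_rsqrt)
      have "(a * R powr (a - 1) * s)^2 = (a * P powr (a - 1) * (p - P)) * (a * Q powr (a - 1) * (q - Q))"
      proof -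
        have "(R powr (a - 1))^2 = (R^2) powr (a - 1)" by (simp add: power2_eq_square powr_mult)
        also have "\<dots> = P powr (a - 1) * Q powr (a - 1)" by (simp add: RR powr_mult)
        finally have e1: "(R powr (a - 1))^2 = P powr (a - 1) * Q powr (a - 1)" .
        have e2: "s^2 = (p - P) * (q - Q)" unfolding s_def using P Q by simp
        have "(a * R powr (a - 1) * s)^2 = a^2 * (R powr (a - 1))^2 * s^2" by (simp add: power_mult_distrib)
        also have "\<dots> = a^2 * (P powr (a - 1) * Q powr (a - 1)) * ((p - P) * (q - Q))" by (simp only: e1 e2)
        finally show ?thesis by (simp add: power2_eq_square algebra_simps)
      qed
      also have "\<dots> \<le> (p powr a - P powr a) * (q powr a - Q powr a)"
        using tP tQ P Q a by (intro mult_mono) (auto intro: powr_mono2)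
      finally show "(a * R powr (a - 1) * s)^2 \<le> (p powr a - P powr a) * (q powr a - Q powr a)" .
    qed
    finally show ?thesis using True a r0 by (simp add: K_def powr_mono2)
  next
    case False
    then have rR': "r \<le> R + s" "R \<le> r" using rs by auto
    have "r powr a - R powr a \<le> (R + s) powr a - R powr a"
      using rR' r0 a by (simp add: powr_mono2)
    also have "\<dots> \<le> K"
    proof -
      have k: "(sqrt P * sqrt Q + sqrt (p - P) * sqrt (q - Q)) powr a - (sqrt P * sqrt Q) powr a \<le>
        sqrt (((sqrt P ^ 2 + sqrt (p - P) ^ 2) powr a - (sqrt P ^ 2) powr a) *
              ((sqrt Q ^ 2 + sqrt (q - Q) ^ 2) powr a - (sqrt Q ^ 2) powr a))"
        by (rule key) (use P Q a in auto)
      have "sqrt P * sqrt Q = R"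
        using RR R0 by (metis real_sqrt_abs real_sqrt_mult abs_of_nonneg)
      moreover have "sqrt (p - P) * sqrt (q - Q) = s" by (simp add: s_def real_sqrt_mult)
      ultimately show ?thesis using k P Q by (simp add: K_def)
    qed
    finally show ?thesis using rR' a R0 by (simp add: K_def powr_mono2)
  qed
qed

lemma claim2x2:
  fixes p P q Q r R a :: real
  assumes P: "0 \<le> P" "P \<le> p" and Q: "0 \<le> Q" "Q \<le> q" and RR: "R^2 = P*Q"
    and rR: "(r - R)^2 \<le> (p-P)*(q-Q)" and a: "1 \<le> a"
  shows "(psi_pow a r - psi_pow a R)^2 \<le> (p powr a - P powr a) * (q powr a - Q powr a)"
proof -
  define K where "K = sqrt ((p powr a - P powr a) * (q powr a - Q powr a))"
  have Kn: "0 \<le> (p powr a - P powr a) * (q powr a - Q powr a)"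
    using P Q a by (intro mult_nonneg_nonneg) (auto intro!: powr_mono2)
  have "\<bar>psi_pow a r - psi_pow a R\<bar> \<le> K"
  proof (cases "0 \<le> r * R")
    case True
    show ?thesis
    proof (cases "0 \<le> r \<and> 0 \<le> R")
      case True
      then show ?thesis using claim_pos[OF P Q RR rR a] by (simp add: psi_nonneg K_def)
    next
      case False
      with \<open>0 \<le> r * R\<close> have "r \<le> 0" "R \<le> 0"
        by (auto simp: zero_le_mult_iff)
      then have "\<bar>(-r) powr a - (-R) powr a\<bar> \<le> K"
        using claim_pos[of P p Q q "-R" "-r" a] P Q RR rR a by (simp add: K_def power2_commute algebra_simps)
      moreover have "psi_pow a r = - ((-r) powr a)" "psi_pow a R = - ((-R) powr a)"
        using psi_neg[of a "-r"] psi_neg[of a "-R"] psi_nonneg[of "-r" a] psi_nonneg[of "-R" a] \<open>r \<le> 0\<close> \<open>R \<le> 0\<close>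
        by auto
      ultimately show ?thesis by (simp add: abs_minus_commute)
    qed
  next
    case False
    define s where "s = sqrt ((p-P)*(q-Q))"
    have rs: "\<bar>r - R\<bar> \<le> s" unfolding s_def by (rule real_le_rsqrt) (use rR in simp)
    have "\<bar>psi_pow a r - psi_pow a R\<bar> = \<bar>r\<bar> powr a + \<bar>R\<bar> powr a"
      using False by (auto simp: psi_pow_def sgn_if zero_le_mult_iff) (smt (verit) powr_ge_zero)+
    also have "\<dots> \<le> (\<bar>r\<bar> + \<bar>R\<bar>) powr a" by (rule superadd) (use a in auto)
    also have "\<bar>r\<bar> + \<bar>R\<bar> = \<bar>r - R\<bar>" using False by (auto simp: zero_le_mult_iff)
    also have "\<bar>r - R\<bar> powr a \<le> s powr a" using rs a by (simp add: powr_mono2)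
    also have "s powr a = sqrt ((p-P) powr a * (q-Q) powr a)"
      unfolding s_def using P Q by (simp add: sqrt_powr powr_mult)
    also have "\<dots> \<le> K" unfolding K_def
      using superadd_diff[of P p a] superadd_diff[of Q q a] P Q a
      by (intro real_sqrt_le_mono mult_mono) (auto intro: powr_mono2)
    finally show ?thesis .
  qed
  then have "(psi_pow a r - psi_pow a R)^2 \<le> K^2"
    by (metis abs_ge_zero power2_abs power_mono)
  then show ?thesis using Kn by (simp add: K_def)
qed

lemma psi_mult: "psi_pow a (x * y) = psi_pow a x * psi_pow a y"
  by (simp add: psi_pow_def sgn_mult abs_mult powr_mult)

lemma psi_div: "0 \<le> d \<Longrightarrow> psi_pow a (x / d) = psi_pow a x / d powr a"
  by (cases "d = 0") (auto simp: psi_pow_def sgn_divide powr_divide)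

lemma psi_zero[simp]: "psi_pow a 0 = 0"
  by (simp add: psi_pow_def)

lemma psi_sqr: "psi_pow a x * psi_pow a x = (x * x) powr a"
  by (cases "x = 0") (auto simp: psi_pow_def sgn_if powr_mult[symmetric] abs_mult_self_eq)

lemma cg_sym: "cycle_graph n i j = cycle_graph n j i"
  unfolding cycle_graph_def by auto

lemma cg_sub: "i < m \<Longrightarrow> j < m \<Longrightarrow> cycle_graph (Suc m) i j \<Longrightarrow> cycle_graph m i j"
  unfolding cycle_graph_def by auto

lemma cg_last: "i < m \<Longrightarrow> cycle_graph (Suc m) i m \<Longrightarrow> i = m - 1 \<or> i = 0"
  unfolding cycle_graph_def by (auto simp: mod_Suc split: if_splits)

lemma cg_wrap: "2 \<le> m \<Longrightarrow> cycle_graph m 0 (m - 1)"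
  unfolding cycle_graph_def by auto

lemma cg_nowrap: "3 \<le> m \<Longrightarrow> \<not> cycle_graph (Suc m) 0 (m - 1)"
  unfolding cycle_graph_def by (auto simp: mod_Suc split: if_splits)


lemma symm_psi: "symm n A \<Longrightarrow> symm n (\<lambda>i j. psi_pow a (A i j))"
  unfolding symm_def by auto

lemma lift:
  assumes A: "psd_mat (Suc m) A" and T: "psd_mat m (schur m (\<lambda>i j. psi_pow a (A i j)))" and a: "1 \<le> a"
  shows "psd_mat (Suc m) (\<lambda>i j. psi_pow a (A i j))"
proof (rule S2[OF symm_psi[OF psd_symm[OF A]] T])
  have nn: "0 \<le> A m m" using psd_diag[OF A] by simp
  show "0 < psi_pow a (A m m) \<or> (psi_pow a (A m m) = 0 \<and> (\<forall>i<m. psi_pow a (A i m) = 0))"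
  proof (cases "A m m = 0")
    case True
    have "A i m = 0" if "i < m" for i using psd_zero[OF A, of m i] True that
      psd_symm[OF A] unfolding symm_def by (metis lessI less_SucI)
    then show ?thesis using True by simp
  next
    case False
    then show ?thesis using nn by (simp add: psi_nonneg)
  qed
qed

lemma base3:
  assumes A: "psd_mat 3 A" and a: "1 \<le> a"
  shows "psd_mat 3 (\<lambda>i j. psi_pow a (A i j))"
proof -
  have A': "psd_mat (Suc 2) A" using A by (simp add: numeral_3_eq_3)
  have sy: "symm (Suc 2) A" using psd_symm[OF A'] .
  have s20: "A 2 0 = A 0 2" and s21: "A 2 1 = A 1 2" and s10: "A 1 0 = A 0 1"
    using sy unfolding symm_def by auto
  define B where "B = schur 2 A"
  have B: "psd_mat 2 B" unfolding B_def by (rule S1[OF A'])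
  define T where "T = (\<lambda>i j. psi_pow a (A i j))"
  define p where "p = A 0 0"
  define q where "q = A 1 1"
  define r where "r = A 0 1"
  define P where "P = A 0 2 * A 2 0 / A 2 2"
  define Q where "Q = A 1 2 * A 2 1 / A 2 2"
  define R where "R = A 0 2 * A 2 1 / A 2 2"
  have d2: "0 \<le> A 2 2" using psd_diag[OF A] by simp
  have d0: "0 \<le> A 0 0" using psd_diag[OF A] by simp
  have d1: "0 \<le> A (Suc 0) (Suc 0)" using psd_diag[OF A] by simp
  have B00: "B 0 0 = p - P" and B11: "B 1 1 = q - Q" and B01: "B 0 1 = r - R"
    by (simp_all add: B_def schur_def p_def q_def r_def P_def Q_def R_def)
  have P0: "0 \<le> P" unfolding P_def s20 using d2 by simp
  have Q0: "0 \<le> Q" unfolding Q_def s21 using d2 by simp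
  have Pp: "P \<le> p" using psd_diag[OF B, of 0] B00 by simp
  have Qq: "Q \<le> q" using psd_diag[OF B, of 1] B11 by simp
  have RR: "R^2 = P * Q"
    using s21 by (cases "A 2 2 = 0") (simp_all add: R_def P_def Q_def s20 power2_eq_square field_simps)
  have rR: "(r - R)^2 \<le> (p - P) * (q - Q)"
    using psd_minor[OF B, of 0 1] B00 B11 B01 by simp
  have Tsy: "symm 3 T" using symm_psi[OF psd_symm[OF A]] unfolding T_def .
  have psiP: "psi_pow a P = P powr a" using P0 by (simp add: psi_nonneg)
  have psiQ: "psi_pow a Q = Q powr a" using Q0 by (simp add: psi_nonneg)
  have T00: "schur 2 T 0 0 = p powr a - P powr a"
    unfolding psiP[symmetric] by (simp add: schur_def T_def p_def P_def psi_mult psi_div d2 d0 psi_nonneg)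
  have T11: "schur 2 T 1 1 = q powr a - Q powr a"
    unfolding psiQ[symmetric] by (simp add: schur_def T_def q_def Q_def psi_mult psi_div d2 psi_nonneg[OF d1] psi_nonneg[OF d2])
  have T01: "schur 2 T 0 1 = psi_pow a r - psi_pow a R"
    by (simp add: schur_def T_def r_def R_def psi_mult psi_div d2 psi_nonneg)
  have "psd_mat 2 (schur 2 T)"
  proof (rule psd2)
    show "symm 2 (schur 2 T)" using symm_schur[of 2 T] Tsy by (simp add: numeral_3_eq_3)
    show "0 \<le> schur 2 T 0 0" unfolding T00 using P0 Pp a by (simp add: powr_mono2)
    show "0 \<le> schur 2 T 1 1" unfolding T11 using Q0 Qq a by (simp add: powr_mono2)
    show "(schur 2 T 0 1)^2 \<le> schur 2 T 0 0 * schur 2 T 1 1"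
      unfolding T00 T11 T01 by (rule claim2x2[OF P0 Pp Q0 Qq RR rR a])
  qed
  then have "psd_mat (Suc 2) T" using lift[OF A', of a] a by (simp add: T_def)
  then show ?thesis by (simp add: T_def numeral_3_eq_3)
qed


lemma step:
  assumes m3: "3 \<le> m" and A: "A \<in> PG (Suc m) (cycle_graph (Suc m)) UNIV" and a: "1 \<le> a"
    and IH: "\<And>B. B \<in> PG m (cycle_graph m) UNIV \<Longrightarrow> psd_mat m (\<lambda>i j. psi_pow a (B i j))"
  shows "psd_mat (Suc m) (\<lambda>i j. psi_pow a (A i j))"
proof -
  have Ap: "psd_mat (Suc m) A" and Az: "\<And>i j. i < Suc m \<Longrightarrow> j < Suc m \<Longrightarrow> i \<noteq> j \<Longrightarrow> \<not> cycle_graph (Suc m) i j \<Longrightarrow> A i j = 0"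
    using A unfolding PG_def by auto
  have sy: "\<And>i j. i < Suc m \<Longrightarrow> j < Suc m \<Longrightarrow> A i j = A j i"
    using psd_symm[OF Ap] unfolding symm_def by auto
  have nbr: "i = m - 1 \<or> i = 0" if "i < m" "A i m \<noteq> 0" for i
  proof -
    have "cycle_graph (Suc m) i m" using Az[of i m] that by auto
    then show ?thesis using cg_last that by blast
  qed
  have prod0: "A i j = 0 \<or> A i m * A m j = 0" if "i < m" "j < m" "i \<noteq> j" for i j
  proof (rule ccontr)
    assume "\<not> ?thesis"
    then have "A i m \<noteq> 0" "A j m \<noteq> 0" "A i j \<noteq> 0" using sy[of m j] that by auto
    then have "i = m - 1 \<or> i = 0" "j = m - 1 \<or> j = 0" using nbr that by auto
    then have "\<not> cycle_graph (Suc m) i j" using cg_nowrap[OF m3] cg_sym that by metis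
    then have "A i j = 0" using Az that by auto
    then show False using \<open>A i j \<noteq> 0\<close> by simp
  qed
  define B where "B = schur m A"
  have Bp: "psd_mat m B" unfolding B_def by (rule S1[OF Ap])
  have BPG: "B \<in> PG m (cycle_graph m) UNIV"
  proof -
    have "B i j = 0" if "i < m" "j < m" "i \<noteq> j" "\<not> cycle_graph m i j" for i j
    proof -
      have "A i j = 0" using Az[of i j] cg_sub[of i m j] that by auto
      moreover have "A i m * A m j = 0"
      proof (rule ccontr)
        assume "A i m * A m j \<noteq> 0"
        then have "A i m \<noteq> 0" "A j m \<noteq> 0" using sy[of m j] that by auto
        then have "i = m - 1 \<or> i = 0" "j = m - 1 \<or> j = 0" using nbr that by auto
        then have "cycle_graph m i j" using cg_wrap[of m] m3 cg_sym that by auto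
        then show False using that by simp
      qed
      ultimately show ?thesis by (simp add: B_def schur_def)
    qed
    then show ?thesis using Bp unfolding PG_def by auto
  qed
  have IHB: "psd_mat m (\<lambda>i j. psi_pow a (B i j))" by (rule IH[OF BPG])
  define T where "T = (\<lambda>i j. psi_pow a (A i j))"
  have dm: "0 \<le> A m m" using psd_diag[OF Ap] by simp
  have Tmm: "T m m = A m m powr a" using dm by (simp add: T_def psi_nonneg)
  have "psd_mat m (schur m T)"
  proof (rule diag_mono[OF IHB])
    show "symm m (schur m T)" using symm_schur symm_psi[OF psd_symm[OF Ap]] unfolding T_def by blast
  next
    fix i j assume ij: "i < m" "j < m" "i \<noteq> j"
    have e: "schur m T i j = psi_pow a (A i j) - psi_pow a (A i m * A m j / A m m)"
      unfolding schur_def T_def using dm by (simp add: psi_div psi_mult psi_nonneg)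
    have "psi_pow a (B i j) = psi_pow a (A i j) - psi_pow a (A i m * A m j / A m m)"
      using prod0[OF ij] by (auto simp: B_def schur_def psi_neg)
    then show "schur m T i j = psi_pow a (B i j)" using e by simp
  next
    fix i assume i: "i < m"
    define Y where "Y = A i m * A m i / A m m"
    have Y0: "0 \<le> Y" unfolding Y_def using sy[of m i] i dm by simp
    have Bii: "B i i = A i i - Y" by (simp add: B_def schur_def Y_def)
    have YA: "Y \<le> A i i" using psd_diag[OF Bp i] Bii by simp
    have "Y powr a = psi_pow a Y" using Y0 by (simp add: psi_nonneg)
    also have "\<dots> = psi_pow a (A i m) * psi_pow a (A m i) / A m m powr a"
      unfolding Y_def using dm by (simp add: psi_div psi_mult)
    finally have yy: "Y powr a = psi_pow a (A i m) * psi_pow a (A m i) / A m m powr a" .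
    have e: "schur m T i i = A i i powr a - Y powr a"
      unfolding schur_def T_def yy using dm psd_diag[OF Ap, of i] i
      by (simp add: psi_nonneg)
    show "psi_pow a (B i i) \<le> schur m T i i"
      unfolding e Bii using YA Y0 a psd_diag[OF Bp i] Bii by (simp add: psi_nonneg superadd_diff)
  qed
  then show ?thesis using lift[OF Ap _ a] by (simp add: T_def)
qed

theorem psi_cycle:
  assumes "3 \<le> n" "1 \<le> a"
  shows "A \<in> PG n (cycle_graph n) UNIV \<Longrightarrow> psd_mat n (\<lambda>i j. psi_pow a (A i j))"
  using assms(1)
proof (induction n arbitrary: A rule: nat_induct_at_least)
  case base
  then show ?case using base3[of A a] assms(2) unfolding PG_def by auto
next
  case (Suc n)
  show ?case by (rule step[OF Suc.hyps(1) Suc.prems assms(2) Suc.IH])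
qed

lemma gram_psd:
  fixes V :: "'k \<Rightarrow> nat \<Rightarrow> real"
  assumes "finite S"
  shows "psd_mat n (\<lambda>i j. \<Sum>k\<in>S. V k i * V k j)"
proof -
  have "qf n (\<lambda>i j. \<Sum>k\<in>S. V k i * V k j) x = (\<Sum>k\<in>S. (\<Sum>i<n. x i * V k i)^2)" for x
  proof -
    have "qf n (\<lambda>i j. \<Sum>k\<in>S. V k i * V k j) x = (\<Sum>i<n. \<Sum>j<n. \<Sum>k\<in>S. (x i * V k i) * (x j * V k j))"
      unfolding qf_def by (simp add: sum_distrib_left sum_distrib_right mult_ac)
    also have "\<dots> = (\<Sum>k\<in>S. \<Sum>i<n. \<Sum>j<n. (x i * V k i) * (x j * V k j))"
      by (subst sum.swap, rule sum.cong[OF refl], subst sum.swap, rule refl)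
    also have "\<dots> = (\<Sum>k\<in>S. (\<Sum>i<n. x i * V k i)^2)"
      by (simp add: power2_eq_square sum_product)
    finally show ?thesis .
  qed
  moreover have "symm n (\<lambda>i j. \<Sum>k\<in>S. V k i * V k j)"
    unfolding symm_def by (simp add: mult.commute)
  ultimately show ?thesis unfolding psd_iff by (simp add: sum_nonneg)
qed

lemma cholesky:
  "psd_mat n A \<Longrightarrow> \<exists>V. \<forall>i<n. \<forall>j<n. A i j = (\<Sum>k<n. V k i * V k j)"
proof (induction n arbitrary: A)
  case 0
  then show ?case by simp
next
  case (Suc m)
  have Ap: "psd_mat (Suc m) A" by fact
  have sy: "\<And>i j. i < Suc m \<Longrightarrow> j < Suc m \<Longrightarrow> A i j = A j i"
    using psd_symm[OF Ap] unfolding symm_def by auto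
  have dm: "0 \<le> A m m" using psd_diag[OF Ap] by simp
  obtain W where W: "\<forall>i<m. \<forall>j<m. schur m A i j = (\<Sum>k<m. W k i * W k j)"
    using Suc.IH[OF S1[OF Ap]] by blast
  define V where "V k i = (if k < m then (if i < m then W k i else 0) else A i m / sqrt (A m m))" for k i
  have last: "V m i * V m j = A i m * A j m / A m m" for i j
    using dm by (simp add: V_def real_sqrt_mult[symmetric])
  have "A i j = (\<Sum>k<Suc m. V k i * V k j)" if "i < Suc m" "j < Suc m" for i j
  proof -
    have s: "(\<Sum>k<Suc m. V k i * V k j) = (\<Sum>k<m. V k i * V k j) + A i m * A j m / A m m"
      by (simp add: last)
    show ?thesis
    proof (cases "i < m \<and> j < m")
      case True
      then have "(\<Sum>k<m. V k i * V k j) = schur m A i j" using W by (simp add: V_def)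
      then show ?thesis using s True sy[of m j] by (simp add: schur_def)
    next
      case False
      then have "(\<Sum>k<m. V k i * V k j) = 0" by (auto simp: V_def)
      moreover have "A i j = A i m * A j m / A m m"
      proof (cases "A m m = 0")
        case True
        have z: "A k m = 0" if "k < Suc m" for k using psd_zero[OF Ap, of m k] True that sy[of m k] by auto
        show ?thesis using False that True z[of i] z[of j] sy by (auto simp: less_Suc_eq)
      next
        case nz: False
        show ?thesis using False that nz sy[of m j] sy[of i m] by (auto simp: less_Suc_eq)
      qed
      ultimately show ?thesis using s by simp
    qed
  qed
  then show ?case by blast
qed

lemma schur_square:
  assumes "psd_mat n A"
  shows "psd_mat n (\<lambda>i j. A i j * A i j)"
proof -
  obtain V where V: "\<forall>i<n. \<forall>j<n. A i j = (\<Sum>k<n. V k i * V k j)" using cholesky[OF assms] by blast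
  define W where "W = (\<lambda>kl i. V (fst kl) i * V (snd kl) i)"
  have "psd_mat n (\<lambda>i j. \<Sum>kl\<in>{..<n}\<times>{..<n}. W kl i * W kl j)" by (rule gram_psd) simp
  moreover have "(\<Sum>kl\<in>{..<n}\<times>{..<n}. W kl i * W kl j) = A i j * A i j" if "i < n" "j < n" for i j
  proof -
    have "A i j * A i j = (\<Sum>k<n. V k i * V k j) * (\<Sum>l<n. V l i * V l j)" using V that by simp
    also have "\<dots> = (\<Sum>k<n. \<Sum>l<n. (V k i * V k j) * (V l i * V l j))" by (simp add: sum_product)
    also have "\<dots> = (\<Sum>kl\<in>{..<n}\<times>{..<n}. W kl i * W kl j)"
      by (simp add: sum.cartesian_product W_def mult_ac split_beta)
    finally show ?thesis by simp
  qed
  ultimately show ?thesis by (rule psd_cong)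
qed

lemma qf_restrict:
  assumes "m \<le> n" "\<And>k. m \<le> k \<Longrightarrow> x k = 0"
  shows "qf n M x = qf m M x"
proof -
  have "qf n M x = (\<Sum>i<m. \<Sum>j<n. x i * M i j * x j)"
    unfolding qf_def by (rule sum.mono_neutral_right) (use assms in auto)
  also have "\<dots> = qf m M x"
    unfolding qf_def by (intro sum.cong refl sum.mono_neutral_right) (use assms in auto)
  finally show ?thesis .
qed

definition V3 :: "nat \<Rightarrow> nat \<Rightarrow> real" where
  "V3 k i = (if k = 0 then (if i \<le> 1 then 1 else 0) else (if i = 1 \<or> i = 2 then 1 else 0))"

definition E3 :: "nat \<Rightarrow> nat \<Rightarrow> real" where
  "E3 i j = (\<Sum>k<2. V3 k i * V3 k j)"

lemma E3_eq: "E3 i j = (if i \<le> 1 \<and> j \<le> 1 then 1 else 0) + (if (i = 1 \<or> i = 2) \<and> (j = 1 \<or> j = 2) then 1 else 0)"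
  by (simp add: E3_def V3_def numeral_2_eq_2)

lemma E3_PG: "3 \<le> n \<Longrightarrow> E3 \<in> PG n (cycle_graph n) {0..}"
proof -
  assume n: "3 \<le> n"
  have "psd_mat n E3" unfolding E3_def[abs_def] by (rule gram_psd) simp
  moreover have "0 \<le> E3 i j" for i j by (simp add: E3_eq)
  moreover have "E3 i j = 0" if "i \<noteq> j" "\<not> cycle_graph n i j" for i j
  proof (rule ccontr)
    assume "E3 i j \<noteq> 0"
    then have "(i = 0 \<and> j = 1) \<or> (i = 1 \<and> j = 0) \<or> (i = 1 \<and> j = 2) \<or> (i = 2 \<and> j = 1)"
      using that(1) by (auto simp: E3_eq split: if_splits)
    then have "cycle_graph n i j" using n unfolding cycle_graph_def by auto
    then show False using that by simp
  qed
  ultimately show ?thesis unfolding PG_def by auto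
qed

lemma E3_bad:
  assumes n: "3 \<le> n" and a: "a < 1"
  shows "\<not> psd_mat n (\<lambda>i j. E3 i j powr a)"
proof
  assume p: "psd_mat n (\<lambda>i j. E3 i j powr a)"
  define x :: "nat \<Rightarrow> real" where "x k = (if k = 0 then 1 else if k = 1 then -1 else if k = 2 then 1 else 0)" for k
  have "0 \<le> qf n (\<lambda>i j. E3 i j powr a) x" using p unfolding psd_iff by blast
  also have "\<dots> = qf 3 (\<lambda>i j. E3 i j powr a) x"
    by (rule qf_restrict) (use n in \<open>auto simp: x_def\<close>)
  also have "\<dots> = 2 powr a - 2"
    by (simp add: qf_def numeral_3_eq_3 x_def E3_eq)
  finally have "2 \<le> 2 powr a" by simp
  moreover have "2 powr a < 2 powr 1" using a by (intro powr_less_mono) auto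
  ultimately show False by simp
qed

definition Gd :: "nat \<Rightarrow> nat \<Rightarrow> real" where
  "Gd n i = (if i = 0 then 2 * real n - 6 else if i \<le> 2 then 2
     else if i = 3 then (if n = 4 then 2 else 3) else if i = n - 1 then 1 else 2)"

definition Gf :: "nat \<Rightarrow> real \<Rightarrow> nat \<Rightarrow> nat \<Rightarrow> real" where
  "Gf n s i j = (if i = j then Gd n i
    else if (i = 0 \<and> j = 1) \<or> (i = 1 \<and> j = 2) \<or> (i = 2 \<and> j = 3) then sqrt 2
    else if i = 0 \<and> j = n - 1 then s * sqrt 2
    else if 3 \<le> i \<and> j = Suc i then 1 else 0)"

definition G :: "nat \<Rightarrow> real \<Rightarrow> nat \<Rightarrow> nat \<Rightarrow> real" where
  "G n s i j = Gf n s (min i j) (max i j)"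

lemma G_sym: "G n s i j = G n s j i"
  unfolding G_def by (simp add: min.commute max.commute)

lemma G_symm: "symm n (G n s)"
  unfolding symm_def using G_sym by auto

lemma G_off_same:
  assumes m: "4 \<le> m" and i: "i < m" and j: "j < m" and ij: "i \<noteq> j"
    and nw: "\<not> ((i = 0 \<and> j = m - 1) \<or> (i = m - 1 \<and> j = 0))"
  shows "G (Suc m) s i j = G m s' i j"
proof -
  define lo where "lo = min i j"
  define hi where "hi = max i j"
  have h: "lo \<noteq> hi" "hi < m" "\<not> (lo = 0 \<and> hi = m - 1)"
    using ij i j nw by (auto simp: lo_def hi_def min_def max_def)
  have "Gf (Suc m) s lo hi = Gf m s' lo hi"
    using h unfolding Gf_def by auto
  then show ?thesis unfolding G_def lo_def hi_def .
qed

lemma Gd_same: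
  assumes m: "4 \<le> m" and i: "i < m" and "i \<noteq> 0" "i \<noteq> m - 1"
  shows "Gd (Suc m) i = Gd m i"
  using assms unfolding Gd_def by auto

lemma G_schur:
  assumes m: "4 \<le> m" and s: "s * s = 1" and i: "i < m" and j: "j < m"
  shows "schur m (G (Suc m) s) i j = G m (-s) i j"
proof -
  have Gmm: "G (Suc m) s m m = 1" using m by (simp add: G_def Gf_def Gd_def)
  have Gim: "G (Suc m) s k m = (if k = 0 then s * sqrt 2 else if k = m - 1 then 1 else 0)" if "k < m" for k
  proof -
    have "G (Suc m) s k m = Gf (Suc m) s k m" using that by (simp add: G_def min_def max_def)
    also have "\<dots> = (if k = 0 then s * sqrt 2 else if k = m - 1 then 1 else 0)"
      using that m unfolding Gf_def by auto
    finally show ?thesis .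
  qed
  have Gmj: "G (Suc m) s m k = (if k = 0 then s * sqrt 2 else if k = m - 1 then 1 else 0)" if "k < m" for k
    using Gim[OF that] G_sym by metis
  have sch: "schur m (G (Suc m) s) i j = G (Suc m) s i j - G (Suc m) s i m * G (Suc m) s m j"
    by (simp add: schur_def Gmm)
  have m1: "m - 1 \<noteq> 0" using m by simp
  have ss: "s * sqrt 2 * (s * sqrt 2) = 2" using s by (simp add: algebra_simps)
  show ?thesis
  proof (cases "i = j")
    case True
    have Gii: "\<And>k. G (Suc m) s k k = Gd (Suc m) k" "\<And>k. G m (-s) k k = Gd m k" by (simp_all add: G_def Gf_def)
    show ?thesis
    proof (cases "i = 0")
      case True
      have "G (Suc m) s 0 0 = 2 * real (Suc m) - 6" "G m (-s) 0 0 = 2 * real m - 6"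
        by (simp_all add: G_def Gf_def Gd_def)
      then show ?thesis using \<open>i = j\<close> True unfolding sch Gim[OF i] Gmj[OF j]
        by (simp add: ss)
    next
      case False
      note i0 = this
      show ?thesis
      proof (cases "i = m - 1")
        case True
        have "Gd (Suc m) i - 1 = Gd m i" using True m unfolding Gd_def by auto
        then show ?thesis using \<open>i = j\<close> True i0 m1 unfolding sch Gim[OF i] Gmj[OF j] by (simp add: Gii)
      next
        case False
        then show ?thesis using \<open>i = j\<close> i0 Gd_same[OF m i i0 False] unfolding sch Gim[OF i] Gmj[OF j] by (simp add: Gii)
      qed
    qed
  next
    case False
    note ij = this
    show ?thesis
    proof (cases "(i = 0 \<and> j = m - 1) \<or> (i = m - 1 \<and> j = 0)")
      case True
      have a: "G (Suc m) s i j = 0" using True m unfolding G_def Gf_def by (auto simp: min_def max_def)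
      have b: "G m (-s) i j = - s * sqrt 2" using True m unfolding G_def Gf_def by (auto simp: min_def max_def)
      show ?thesis unfolding sch Gim[OF i] Gmj[OF j] a b using True m1 by auto
    next
      case False
      have p0: "G (Suc m) s i m * G (Suc m) s m j = 0"
        unfolding Gim[OF i] Gmj[OF j] using False ij by auto
      show ?thesis unfolding sch p0 G_off_same[OF m i j ij False, of s "-s"] by simp
    qed
  qed
qed

lemma G_mm: "4 \<le> m \<Longrightarrow> G (Suc m) s m m = 1"
  by (simp add: G_def Gf_def Gd_def)

lemma G_equiv:
  assumes "4 \<le> n"
  shows "s * s = 1 \<Longrightarrow> psd_mat n (G n s) = psd_mat 4 (G 4 (s * (-1)^(n-4)))"
  using assms
proof (induction n arbitrary: s rule: nat_induct_at_least)
  case base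
  then show ?case by simp
next
  case (Suc n)
  have ss: "(-s) * (-s) = 1" using Suc.prems by simp
  have "psd_mat (Suc n) (G (Suc n) s) = psd_mat n (schur n (G (Suc n) s))"
  proof
    assume "psd_mat (Suc n) (G (Suc n) s)"
    then show "psd_mat n (schur n (G (Suc n) s))" by (rule S1)
  next
    assume "psd_mat n (schur n (G (Suc n) s))"
    then show "psd_mat (Suc n) (G (Suc n) s)"
      by (rule S2[OF G_symm]) (use G_mm[OF Suc.hyps(1)] in simp)
  qed
  also have "\<dots> = psd_mat n (G n (-s))"
    using G_schur[OF Suc.hyps(1) Suc.prems] psd_cong by metis
  also have "\<dots> = psd_mat 4 (G 4 (-s * (-1)^(n-4)))" by (rule Suc.IH[OF ss])
  also have "-s * (-1)^(n-4) = s * (-1)^(Suc n - 4)"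
  proof -
    obtain k where "n = 4 + k" using Suc.hyps(1) by (metis le_add_diff_inverse)
    then show ?thesis by simp
  qed
  finally show ?case .
qed

lemma less4: "i < (4::nat) \<Longrightarrow> i = 0 \<or> i = 1 \<or> i = 2 \<or> i = 3"
  by auto

lemma G4_psd: "psd_mat 4 (G 4 (-1))"
proof -
  define U :: "nat \<Rightarrow> nat \<Rightarrow> real" where
    "U k i = (if k = 0 then (if i = 0 then sqrt 2 else if i = 1 then 1 else if i = 3 then -1 else 0)
              else (if i = 1 then 1 else if i = 2 then sqrt 2 else if i = 3 then 1 else 0))" for k i
  have "psd_mat 4 (\<lambda>i j. \<Sum>k<2. U k i * U k j)" by (rule gram_psd) simp
  moreover have "(\<Sum>k<2. U k i * U k j) = G 4 (-1) i j" if "i < 4" "j < 4" for i j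
    using less4[OF that(1)] less4[OF that(2)]
    by (elim disjE) (simp_all add: U_def G_def Gf_def Gd_def numeral_2_eq_2)
  ultimately show ?thesis by (rule psd_cong)
qed

lemma qf4: "qf 4 M x = (\<Sum>i\<in>{0,1,2,3}. \<Sum>j\<in>{0,1,2,3}. x i * M i j * x j)"
proof -
  have "{..<4::nat} = {0,1,2,3}" by auto
  then show ?thesis unfolding qf_def by simp
qed

lemma G4_bad: "\<not> psd_mat 4 (G 4 1)"
proof
  assume p: "psd_mat 4 (G 4 1)"
  define x :: "nat \<Rightarrow> real" where "x k = (if even k then 1 else -1)" for k
  have "0 \<le> qf 4 (G 4 1) x" using p unfolding psd_iff by blast
  also have "qf 4 (G 4 1) x = 8 - 8 * sqrt 2"
    unfolding qf4 by (simp add: x_def G_def Gf_def Gd_def)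
  finally show False by simp
qed

lemma G4_phi_bad:
  assumes a: "a < 2"
  shows "\<not> psd_mat 4 (\<lambda>i j. phi_pow a (G 4 (-1) i j))"
proof
  assume p: "psd_mat 4 (\<lambda>i j. phi_pow a (G 4 (-1) i j))"
  define x :: "nat \<Rightarrow> real" where "x k = (if even k then 1 else -1)" for k
  define t where "t = sqrt 2 powr a"
  have t2: "2 powr a = t * t" unfolding t_def by (simp add: powr_mult[symmetric])
  have tpos: "0 < t" unfolding t_def by simp
  have "t < sqrt 2 powr 2" unfolding t_def using a by (intro powr_less_mono) auto
  then have tlt: "t < 2" by simp
  have "0 \<le> qf 4 (\<lambda>i j. phi_pow a (G 4 (-1) i j)) x" using p unfolding psd_iff by blast
  also have "qf 4 (\<lambda>i j. phi_pow a (G 4 (-1) i j)) x = 4 * (2 powr a) - 8 * t"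
    unfolding qf4 by (simp add: x_def G_def Gf_def Gd_def phi_pow_def t_def)
  also have "\<dots> = 4 * t * (t - 2)" unfolding t2 by (simp add: algebra_simps)
  finally show False using tpos tlt by (simp add: mult_pos_neg zero_le_mult_iff)
qed

lemma Gf_nz:
  assumes "lo < hi" "hi < n" "4 \<le> n" "Gf n s lo hi \<noteq> 0"
  shows "cycle_graph n lo hi"
proof -
  have "(lo = 0 \<and> hi = 1) \<or> (lo = 1 \<and> hi = 2) \<or> (lo = 2 \<and> hi = 3) \<or> (lo = 0 \<and> hi = n - 1) \<or> hi = Suc lo"
    using assms unfolding Gf_def by (auto split: if_splits)
  then show ?thesis using assms unfolding cycle_graph_def by auto
qed

lemma G_PG:
  assumes n: "4 \<le> n" and ev: "even n"
  shows "G n (-1) \<in> PG n (cycle_graph n) UNIV"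
proof -
  have "(-1::real)^(n-4) = 1" using ev n by (simp add: neg_one_even_power)
  then have "psd_mat n (G n (-1))" using G_equiv[OF n, of "-1"] G4_psd by simp
  moreover have "G n (-1) i j = 0" if "i < n" "j < n" "i \<noteq> j" "\<not> cycle_graph n i j" for i j
  proof (rule ccontr)
    assume nz: "G n (-1) i j \<noteq> 0"
    have "cycle_graph n (min i j) (max i j)"
      using Gf_nz[of "min i j" "max i j" n "-1"] nz that n unfolding G_def by (auto simp: min_def max_def)
    then have "cycle_graph n i j" using cg_sym by (metis min_def max_def)
    then show False using that by simp
  qed
  ultimately show ?thesis unfolding PG_def by auto
qed

lemma G_phi1:
  assumes "4 \<le> n"
  shows "(\<lambda>i j. phi_pow 1 (G n (-1) i j)) = G n 1"
proof (intro ext)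
  fix i j
  have "\<bar>Gf n (-1) lo hi\<bar> = Gf n 1 lo hi" for lo hi
    using assms unfolding Gf_def Gd_def by auto
  note h = this
  have "phi_pow 1 (G n (-1) i j) = \<bar>Gf n (-1) (min i j) (max i j)\<bar>" by (simp add: phi_pow_def G_def)
  also have "\<dots> = Gf n 1 (min i j) (max i j)" by (rule h)
  also have "\<dots> = G n 1 i j" by (simp add: G_def)
  finally show "phi_pow 1 (G n (-1) i j) = G n 1 i j" .
qed

lemma psi_PG:
  assumes "3 \<le> n" "1 \<le> a" "A \<in> PG n (cycle_graph n) UNIV"
  shows "(\<lambda>i j. psi_pow a (A i j)) \<in> PG n (cycle_graph n) UNIV"
  using psi_cycle[OF assms(1,2) assms(3)] assms(3) unfolding PG_def by auto

lemma hpow_PG: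
  assumes "3 \<le> n" "1 \<le> a" "A \<in> PG n (cycle_graph n) {0..}"
  shows "hpow a A \<in> PG n (cycle_graph n) UNIV"
proof -
  have A: "A \<in> PG n (cycle_graph n) UNIV" using assms(3) unfolding PG_def by auto
  have "psd_mat n (hpow a A)"
    using psd_cong[OF psi_cycle[OF assms(1,2) A]] assms(3)
    unfolding PG_def hpow_def by (auto simp: psi_nonneg)
  then show ?thesis using assms(3) unfolding PG_def hpow_def by auto
qed

lemma phi_ge2:
  assumes n: "3 \<le> n" and a: "2 \<le> a" and A: "A \<in> PG n (cycle_graph n) UNIV"
  shows "(\<lambda>i j. phi_pow a (A i j)) \<in> PG n (cycle_graph n) UNIV"
proof -
  define B where "B = (\<lambda>i j. A i j * A i j)"
  have "B \<in> PG n (cycle_graph n) UNIV"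
    using schur_square[of n A] A unfolding PG_def B_def by auto
  from psi_cycle[OF n _ this] a have p: "psd_mat n (\<lambda>i j. psi_pow (a/2) (B i j))" by simp
  have e: "psi_pow (a/2) (x * x) = phi_pow a x" for x
  proof -
    have ab: "\<bar>x\<bar> powr a = x powr a"
      by (cases "0 \<le> x") (auto simp: uminus_powr_eq[of x a, symmetric])
    have "psi_pow (a/2) (x * x) = (x * x) powr (a/2)"
      by (simp add: psi_nonneg)
    also have "\<dots> = x powr (a/2 + a/2)" by (simp only: powr_mult powr_add)
    finally show ?thesis by (simp add: phi_pow_def ab)
  qed
  have "(\<lambda>i j. psi_pow (a/2) (B i j)) = (\<lambda>i j. phi_pow a (A i j))" by (simp add: B_def e)
  then show ?thesis using p A unfolding PG_def by (auto simp: phi_pow_def)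
qed

lemma not_in_lt1:
  assumes n: "3 \<le> n" and a: "a < 1"
  shows "a \<notin> HG n (cycle_graph n)" "a \<notin> HG_psi n (cycle_graph n)" "a \<notin> HG_phi n (cycle_graph n)"
proof -
  have E: "E3 \<in> PG n (cycle_graph n) {0..}" by (rule E3_PG[OF n])
  have EU: "E3 \<in> PG n (cycle_graph n) UNIV" using E unfolding PG_def by auto
  have nn: "0 \<le> E3 i j" for i j by (simp add: E3_eq)
  have bad: "\<not> psd_mat n (\<lambda>i j. E3 i j powr a)" by (rule E3_bad[OF n a])
  show "a \<notin> HG n (cycle_graph n)"
    using E bad unfolding HG_def PG_def hpow_def by blast
  have "(\<lambda>i j. psi_pow a (E3 i j)) = (\<lambda>i j. E3 i j powr a)" using nn by (simp add: psi_nonneg)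
  then show "a \<notin> HG_psi n (cycle_graph n)"
    using EU bad unfolding HG_psi_def PG_def by auto
  have "(\<lambda>i j. phi_pow a (E3 i j)) = (\<lambda>i j. E3 i j powr a)" using nn by (simp add: phi_pow_def)
  then show "a \<notin> HG_phi n (cycle_graph n)"
    using EU bad unfolding HG_phi_def PG_def by auto
qed

theorem proposition4p3:
  shows "(\<forall>n::nat. n \<ge> 3 \<longrightarrow>
            HG n (cycle_graph n) = {1..} \<and> HG_psi n (cycle_graph n) = {1..})
       \<and> HG_phi 4 (cycle_graph 4) = {2..}
       \<and> (\<forall>n::nat. n > 4 \<longrightarrow>
            {2..} \<subseteq> HG_phi n (cycle_graph n) \<and> HG_phi n (cycle_graph n) \<subseteq> {1..}
            \<and> (even n \<longrightarrow> (1::real) \<notin> HG_phi n (cycle_graph n)))"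
proof (intro conjI allI impI)
  fix n :: nat assume n: "3 \<le> n"
  show "HG n (cycle_graph n) = {1..}"
  proof
    show "HG n (cycle_graph n) \<subseteq> {1..}" using not_in_lt1(1)[OF n] by force
    show "{1..} \<subseteq> HG n (cycle_graph n)" using hpow_PG[OF n] unfolding HG_def by auto
  qed
  show "HG_psi n (cycle_graph n) = {1..}"
  proof
    show "HG_psi n (cycle_graph n) \<subseteq> {1..}" using not_in_lt1(2)[OF n] by force
    show "{1..} \<subseteq> HG_psi n (cycle_graph n)" using psi_PG[OF n] unfolding HG_psi_def by auto
  qed
next
  show "HG_phi 4 (cycle_graph 4) = {2..}"
  proof
    show "{2..} \<subseteq> HG_phi 4 (cycle_graph 4)" using phi_ge2[of 4] unfolding HG_phi_def by auto
    show "HG_phi 4 (cycle_graph 4) \<subseteq> {2..}"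
    proof
      fix a assume a: "a \<in> HG_phi 4 (cycle_graph 4)"
      show "a \<in> {2..}"
      proof (rule ccontr)
        assume "a \<notin> {2..}"
        then have "a < 2" by simp
        have "G 4 (-1) \<in> PG 4 (cycle_graph 4) UNIV" by (rule G_PG) simp_all
        then have "psd_mat 4 (\<lambda>i j. phi_pow a (G 4 (-1) i j))" using a unfolding HG_phi_def PG_def by blast
        then show False using G4_phi_bad[OF \<open>a < 2\<close>] by simp
      qed
    qed
  qed
next
  fix n :: nat assume n: "4 < n"
  then have n3: "3 \<le> n" and n4: "4 \<le> n" by auto
  show "{2..} \<subseteq> HG_phi n (cycle_graph n)" using phi_ge2[OF n3] unfolding HG_phi_def by auto
  show "HG_phi n (cycle_graph n) \<subseteq> {1..}" using not_in_lt1(3)[OF n3] by force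
  assume ev: "even n"
  show "(1::real) \<notin> HG_phi n (cycle_graph n)"
  proof
    assume "(1::real) \<in> HG_phi n (cycle_graph n)"
    then have "psd_mat n (\<lambda>i j. phi_pow 1 (G n (-1) i j))"
      using G_PG[OF n4 ev] unfolding HG_phi_def PG_def by blast
    then have "psd_mat n (G n 1)" unfolding G_phi1[OF n4] .
    moreover have "(-1::real)^(n-4) = 1" using ev n4 by (simp add: neg_one_even_power)
    ultimately have "psd_mat 4 (G 4 1)" using G_equiv[OF n4, of 1] by simp
    then show False using G4_bad by simp
  qed
qed

end
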